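(* Let $G=(V,E)$ be a $d$-regular graph with $d\ge 1$ that is a UNN, and let $s:E\to\{-1,+1\}$ be any signing. Then the 2-lift $\hat G$ of $G$ with respect to $s$ is a UNN.
   Context: All graphs are finite, simple and undirected. For a vertex $v$, $\mathrm{nb}(v)$ denotes its set of neighbors (a vertex is not its own neighbor). A graph is a unique-neighborhood network (UNN) if distinct vertices have distinct neighborhoods. The 2-lift of $G=(V,E)$ with respect to a signing $s:E\to\{-1,+1\}$ is the graph $\hat G$ with vertex set $\{x_1,x_2 : x\in V\}$ (two copies of each vertex) and, for each edge $\{x,y\}\in E$: the edges $\{x_1,y_1\},\{x_2,y_2\}$ if $s(\{x,y\})=+1$, and the edges $\{x_1,y_2\},\{x_2,y_1\}$ if $s(\{x,y\})=-1$; $\hat G$ has no other edges. *)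

theory Defs
  imports Main
begin

definition simple_graph :: "'a set \<Rightarrow> 'a set set \<Rightarrow> bool" where
  "simple_graph V E \<longleftrightarrow> finite V \<and> (\<forall>e\<in>E. e \<subseteq> V \<and> card e = 2)"

definition nb :: "'a set set \<Rightarrow> 'a \<Rightarrow> 'a set" where
  "nb E x = {y. {x, y} \<in> E}"

definition regular :: "'a set \<Rightarrow> 'a set set \<Rightarrow> nat \<Rightarrow> bool" where
  "regular V E d \<longleftrightarrow> (\<forall>x\<in>V. card (nb E x) = d)"

definition UNN :: "'a set \<Rightarrow> 'a set set \<Rightarrow> bool" where
  "UNN V E \<longleftrightarrow> (\<forall>x\<in>V. \<forall>y\<in>V. x \<noteq> y \<longrightarrow> nb E x \<noteq> nb E y)"

definition signing :: "'a set set \<Rightarrow> ('a set \<Rightarrow> int) \<Rightarrow> bool" where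
  "signing E s \<longleftrightarrow> (\<forall>e\<in>E. s e = 1 \<or> s e = -1)"

text \<open>2-lift: copy x_1 is (x,1), copy x_2 is (x,2).\<close>
definition lift_vertices :: "'a set \<Rightarrow> ('a \<times> nat) set" where
  "lift_vertices V = V \<times> {1, 2}"

definition lift_edges :: "'a set set \<Rightarrow> ('a set \<Rightarrow> int) \<Rightarrow> ('a \<times> nat) set set" where
  "lift_edges E s =
     {{(x,1),(y,1)} | x y. {x,y} \<in> E \<and> s {x,y} = 1} \<union>
     {{(x,2),(y,2)} | x y. {x,y} \<in> E \<and> s {x,y} = 1} \<union>
     {{(x,1),(y,2)} | x y. {x,y} \<in> E \<and> s {x,y} = -1} \<union>
     {{(x,2),(y,1)} | x y. {x,y} \<in> E \<and> s {x,y} = -1}"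

end

theory Submission
  imports Defs
begin

lemma char1:
  assumes i: "i \<in> {1,2}" and h: "{(x,i),(y,k)} \<in> lift_edges E s"
  shows "{x,y} \<in> E \<and> k \<in> {1,2} \<and> (s {x,y} = 1 \<longleftrightarrow> k = i)"
proof -
  have "(((\<exists>a b. {(x,i),(y,k)} = {(a,1),(b,1)} \<and> {a,b} \<in> E \<and> s {a,b} = 1)
   \<or> (\<exists>a b. {(x,i),(y,k)} = {(a,2),(b,2)} \<and> {a,b} \<in> E \<and> s {a,b} = 1))
   \<or> (\<exists>a b. {(x,i),(y,k)} = {(a,1),(b,2)} \<and> {a,b} \<in> E \<and> s {a,b} = -1))
   \<or> (\<exists>a b. {(x,i),(y,k)} = {(a,2),(b,1)} \<and> {a,b} \<in> E \<and> s {a,b} = -1)"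
    using h unfolding lift_edges_def Un_iff mem_Collect_eq .
  thus ?thesis
  proof (elim disjE exE conjE)
    fix a b assume e: "{(x,i),(y,k)} = {(a,1::nat),(b,1)}" and E: "{a,b} \<in> E" and s: "s {a,b} = 1"
    from e have "(x = a \<and> i = 1 \<and> y = b \<and> k = 1) \<or> (x = b \<and> i = 1 \<and> y = a \<and> k = 1)"
      unfolding doubleton_eq_iff prod.inject by blast
    thus ?thesis using E s by (elim disjE) (simp_all add: insert_commute)
  next
    fix a b assume e: "{(x,i),(y,k)} = {(a,2::nat),(b,2)}" and E: "{a,b} \<in> E" and s: "s {a,b} = 1"
    from e have "(x = a \<and> i = 2 \<and> y = b \<and> k = 2) \<or> (x = b \<and> i = 2 \<and> y = a \<and> k = 2)"
      unfolding doubleton_eq_iff prod.inject by blast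
    thus ?thesis using E s by (elim disjE) (simp_all add: insert_commute)
  next
    fix a b assume e: "{(x,i),(y,k)} = {(a,1::nat),(b,2)}" and E: "{a,b} \<in> E" and s: "s {a,b} = -1"
    from e have "(x = a \<and> i = 1 \<and> y = b \<and> k = 2) \<or> (x = b \<and> i = 2 \<and> y = a \<and> k = 1)"
      unfolding doubleton_eq_iff prod.inject by blast
    thus ?thesis using E s by (elim disjE) (simp_all add: insert_commute)
  next
    fix a b assume e: "{(x,i),(y,k)} = {(a,2::nat),(b,1)}" and E: "{a,b} \<in> E" and s: "s {a,b} = -1"
    from e have "(x = a \<and> i = 2 \<and> y = b \<and> k = 1) \<or> (x = b \<and> i = 1 \<and> y = a \<and> k = 2)"
      unfolding doubleton_eq_iff prod.inject by blast
    thus ?thesis using E s by (elim disjE) (simp_all add: insert_commute)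
  qed
qed
lemma L1: "{x,y}\<in>E \<Longrightarrow> s{x,y}=1 \<Longrightarrow> {(x,1::nat),(y,1)} \<in> lift_edges E s"
  unfolding lift_edges_def by (intro UnI1) (rule CollectI, intro exI conjI, rule refl)
lemma L2: "{x,y}\<in>E \<Longrightarrow> s{x,y}=1 \<Longrightarrow> {(x,2::nat),(y,2)} \<in> lift_edges E s"
  unfolding lift_edges_def by (rule UnI1, rule UnI1, rule UnI2) (rule CollectI, intro exI conjI, rule refl)
lemma L3: "{x,y}\<in>E \<Longrightarrow> s{x,y}=-1 \<Longrightarrow> {(x,1::nat),(y,2)} \<in> lift_edges E s"
  unfolding lift_edges_def by (rule UnI1, rule UnI2) (rule CollectI, intro exI conjI, rule refl)
lemma L4: "{x,y}\<in>E \<Longrightarrow> s{x,y}=-1 \<Longrightarrow> {(x,2::nat),(y,1)} \<in> lift_edges E s"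
  unfolding lift_edges_def by (rule UnI2) (rule CollectI, intro exI conjI, rule refl)
lemma char:
  assumes sg: "signing E s" and i: "i \<in> {1,2}"
  shows "(y,k) \<in> nb (lift_edges E s) (x,i) \<longleftrightarrow>
    {x,y} \<in> E \<and> k \<in> {1,2} \<and> (s {x,y} = 1 \<longleftrightarrow> k = i)"
proof
  assume "(y,k) \<in> nb (lift_edges E s) (x,i)"
  hence h: "{(x,i),(y,k)} \<in> lift_edges E s" by (simp add: nb_def)
  show "{x,y} \<in> E \<and> k \<in> {1,2} \<and> (s {x,y} = 1 \<longleftrightarrow> k = i)"
    using char1[OF i h] .
next
  assume h: "{x,y} \<in> E \<and> k \<in> {1,2} \<and> (s {x,y} = 1 \<longleftrightarrow> k = i)"
  have s: "s {x,y} = 1 \<or> s {x,y} = -1" using sg h unfolding signing_def by blast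
  have "{(x,i),(y,k)} \<in> lift_edges E s"
  proof -
    have "i = 1 \<or> i = 2" "k = 1 \<or> k = 2" using i h by auto
    then consider "i = 1" "k = 1" | "i = 2" "k = 2" | "i = 1" "k = 2" | "i = 2" "k = 1" by blast
    thus ?thesis
    proof cases
      case 1
      hence "s {x,y} = 1" using h by simp
      hence "{(x,1::nat),(y,1)} \<in> lift_edges E s" by (rule L1[OF conjunct1[OF h]])
      thus ?thesis using 1 by simp
    next
      case 2
      hence "s {x,y} = 1" using h by simp
      hence "{(x,2::nat),(y,2)} \<in> lift_edges E s" by (rule L2[OF conjunct1[OF h]])
      thus ?thesis using 2 by simp
    next
      case 3 hence "s {x,y} = -1" using h s by auto
      hence "{(x,1::nat),(y,2)} \<in> lift_edges E s" by (rule L3[OF conjunct1[OF h]])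
      thus ?thesis using 3 by simp
    next
      case 4 hence "s {x,y} = -1" using h s by auto
      hence "{(x,2::nat),(y,1)} \<in> lift_edges E s" by (rule L4[OF conjunct1[OF h]])
      thus ?thesis using 4 by simp
    qed
  qed
  thus "(y,k) \<in> nb (lift_edges E s) (x,i)" by (simp add: nb_def)
qed

theorem lemma5:
  fixes V :: "'a set" and E :: "'a set set" and s :: "'a set \<Rightarrow> int" and d :: nat
  assumes "simple_graph V E"
    and "regular V E d" and "d \<ge> 1"
    and "UNN V E"
    and "signing E s"
  shows "UNN (lift_vertices V) (lift_edges E s)"
  unfolding UNN_def
proof (intro ballI impI notI)
  fix p q assume p: "p \<in> lift_vertices V" and q: "q \<in> lift_vertices V" and ne: "p \<noteq> q"
    and eq: "nb (lift_edges E s) p = nb (lift_edges E s) q"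
  obtain x i where pxi: "p = (x,i)" and x: "x \<in> V" and i: "i \<in> {1,2}"
    using p by (auto simp: lift_vertices_def)
  obtain y j where qyj: "q = (y,j)" and y: "y \<in> V" and j: "j \<in> {1,2}"
    using q by (auto simp: lift_vertices_def)
  have sub: "nb E x \<subseteq> nb E y" if
     eqn: "nb (lift_edges E s) (x,i) = nb (lift_edges E s) (y,j)"
     and i: "i \<in> {1,2}" and j: "j \<in> {1,2}" for x y i j
  proof
    fix z assume "z \<in> nb E x"
    hence e: "{x,z} \<in> E" by (simp add: nb_def)
    define k where "k = (if s {x,z} = 1 then i else 3 - i)"
    have "(z,k) \<in> nb (lift_edges E s) (x,i)"
      using e i by (subst char[OF assms(5) i]) (auto simp: k_def)
    hence "(z,k) \<in> nb (lift_edges E s) (y,j)" using eqn by simp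
    hence "{y,z} \<in> E" using char[OF assms(5) j] by blast
    thus "z \<in> nb E y" by (simp add: nb_def)
  qed
  have "nb E x = nb E y" using sub[of x i y j] sub[of y j x i] eq pxi qyj i j by auto
  hence xy: "x = y" using assms(4) x y unfolding UNN_def by blast
  hence ij: "i \<noteq> j" using ne pxi qyj by simp
  have "card (nb E x) \<ge> 1" using assms(2,3) x by (simp add: regular_def)
  then obtain z where "z \<in> nb E x" by (metis card.empty ex_in_conv not_one_le_zero)
  hence e: "{x,z} \<in> E" by (simp add: nb_def)
  define k where "k = (if s {x,z} = 1 then i else 3 - i)"
  have "(z,k) \<in> nb (lift_edges E s) (x,i)"
    using e i by (subst char[OF assms(5) i]) (auto simp: k_def)
  hence "(z,k) \<in> nb (lift_edges E s) (x,j)" using eq pxi qyj xy by simp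
  hence "s {x,z} = 1 \<longleftrightarrow> k = j" using char[OF assms(5) j] by blast
  moreover have "i = 1 \<and> j = 2 \<or> i = 2 \<and> j = 1" using ij i j by auto
  ultimately have iff: "s {x,z} = 1 \<longleftrightarrow> k = j" and ij2: "i = 1 \<and> j = 2 \<or> i = 2 \<and> j = 1" by auto
  have c1: "k = i" if "s {x,z} = 1" using that by (simp add: k_def)
  have c2: "k = j" if "s {x,z} \<noteq> 1"
  proof -
    have "k = 3 - i" using that by (simp add: k_def)
    moreover have "3 - i = j" using ij2 by auto
    ultimately show ?thesis by simp
  qed
  have s1: "s {x,z} = 1"
  proof (rule ccontr)
    assume a: "s {x,z} \<noteq> 1"
    hence "k = j" by (rule c2)
    hence "s {x,z} = 1" using iff by (rule iffD2[rotated])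
    with a show False by (rule notE)
  qed
  have "k = i" using s1 by (rule c1)
  moreover have "k = j" using iff s1 by (rule iffD1)
  ultimately show False using ij by simp
qed

end
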